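(* Let $(G,u,v)$ be a twice-marked graph and $D$ a submodular divisor on $G$. Then $\mathrm{sci}(\tau^{u,v}_D)=|\lambda(D,v)|$.
   Context: A graph is a finite, connected, loopless multigraph (parallel edges allowed); its genus is $g=|E(G)|-|V(G)|+1$. A divisor is an element of the free abelian group on $V(G)$. Linear equivalence is generated by chip-firing (firing $w$ subtracts $\mathrm{val}(w)$ chips from $w$ and adds to each other vertex the number of edges joining it to $w$). The rank $r(D)$ is $-1$ if $D$ is not equivalent to an effective divisor, else the largest $r\ge0$ such that $D-E$ is equivalent to an effective divisor for every effective $E$ of degree $r$. $\delta(P)$ is $1$ if $P$ holds and $0$ otherwise. A twice-marked graph $(G,u,v)$ is a graph with two chosen vertices. A twist of $D$ is $D+au+bv$. $\Delta(D)=r(D)-r(D-u)-r(D-v)+r(D-u-v)$. $D$ is submodular if $\Delta(D')\ge0$ for all twists $D'$. If $D$ is submodular, its transmission permutation $\tau^{u,v}_D$ is the unique bijection $\mathbb Z\to\mathbb Z$ with $\delta(\tau^{u,v}_D(b)=a)=\Delta(D+au-bv)$ for all $a,b$. For a bijection $\alpha:\mathbb Z\to\mathbb Z$, a sign-changing inversion is a pair $(x,y)\in\mathbb Z^2$ with $x<y$ and $\alpha(x)>0\ge\alpha(y)$; $\mathrm{sci}(\alpha)$ is their number. For a vertex $v$ and divisor $D$ on a genus-$g$ graph, $s_i(D,v)=\min\{\ell\in\mathbb Z: r(D+\ell v)\ge i\}$ and $\lambda_i(D,v)=i-s_i(D,v)+g-\deg D$ for $i\ge0$; the Weierstrass partition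 $\lambda(D,v)=(\lambda_0,\lambda_1,\dots)$ is a nonincreasing sequence of nonnegative integers, finitely many nonzero, and $|\lambda(D,v)|=\sum_i\lambda_i(D,v)$. *)

theory Defs
  imports Main
begin

definition graph :: "'v set \<Rightarrow> ('v \<Rightarrow> 'v \<Rightarrow> nat) \<Rightarrow> bool" where
  "graph V m \<longleftrightarrow> finite V \<and> V \<noteq> {} \<and> (\<forall>x y. m x y = m y x) \<and> (\<forall>x. m x x = 0)
     \<and> (\<forall>x y. 0 < m x y \<longrightarrow> x \<in> V \<and> y \<in> V)
     \<and> (\<forall>x\<in>V. \<forall>y\<in>V. (x, y) \<in> {(a, b). 0 < m a b}\<^sup>*)"

definition num_edges :: "'v set \<Rightarrow> ('v \<Rightarrow> 'v \<Rightarrow> nat) \<Rightarrow> nat" where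
  "num_edges V m = (\<Sum>x\<in>V. \<Sum>y\<in>V. m x y) div 2"

definition genus :: "'v set \<Rightarrow> ('v \<Rightarrow> 'v \<Rightarrow> nat) \<Rightarrow> int" where
  "genus V m = int (num_edges V m) - int (card V) + 1"

definition divisor :: "'v set \<Rightarrow> ('v \<Rightarrow> int) \<Rightarrow> bool" where
  "divisor V D \<longleftrightarrow> (\<forall>x. x \<notin> V \<longrightarrow> D x = 0)"

definition deg :: "'v set \<Rightarrow> ('v \<Rightarrow> int) \<Rightarrow> int" where
  "deg V D = (\<Sum>x\<in>V. D x)"

definition effective :: "('v \<Rightarrow> int) \<Rightarrow> bool" where
  "effective D \<longleftrightarrow> (\<forall>x. 0 \<le> D x)"

definition vtx :: "'v \<Rightarrow> 'v \<Rightarrow> int" where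
  "vtx w = (\<lambda>x. if x = w then 1 else 0)"

text \<open>Laplacian: firing each vertex w exactly f w times (negative = reverse firing)
  subtracts lap f from the divisor.\<close>
definition lap :: "'v set \<Rightarrow> ('v \<Rightarrow> 'v \<Rightarrow> nat) \<Rightarrow> ('v \<Rightarrow> int) \<Rightarrow> 'v \<Rightarrow> int" where
  "lap V m f = (\<lambda>x. if x \<in> V then (\<Sum>y\<in>V. int (m x y) * (f x - f y)) else 0)"

definition lin_equiv :: "'v set \<Rightarrow> ('v \<Rightarrow> 'v \<Rightarrow> nat) \<Rightarrow> ('v \<Rightarrow> int) \<Rightarrow> ('v \<Rightarrow> int) \<Rightarrow> bool" where
  "lin_equiv V m D D' \<longleftrightarrow> (\<exists>f. \<forall>x. D' x = D x - lap V m f x)"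

definition equiv_eff :: "'v set \<Rightarrow> ('v \<Rightarrow> 'v \<Rightarrow> nat) \<Rightarrow> ('v \<Rightarrow> int) \<Rightarrow> bool" where
  "equiv_eff V m D \<longleftrightarrow> (\<exists>F. divisor V F \<and> effective F \<and> lin_equiv V m D F)"

definition rank :: "'v set \<Rightarrow> ('v \<Rightarrow> 'v \<Rightarrow> nat) \<Rightarrow> ('v \<Rightarrow> int) \<Rightarrow> int" where
  "rank V m D = (if \<not> equiv_eff V m D then -1 else
     (GREATEST r::int. 0 \<le> r \<and> (\<forall>E. divisor V E \<and> effective E \<and> deg V E = r
         \<longrightarrow> equiv_eff V m (\<lambda>x. D x - E x))))"

definition twist :: "('v \<Rightarrow> int) \<Rightarrow> 'v \<Rightarrow> 'v \<Rightarrow> int \<Rightarrow> int \<Rightarrow> 'v \<Rightarrow> int" where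
  "twist D u v a b = (\<lambda>x. D x + a * vtx u x + b * vtx v x)"

definition Delta :: "'v set \<Rightarrow> ('v \<Rightarrow> 'v \<Rightarrow> nat) \<Rightarrow> 'v \<Rightarrow> 'v \<Rightarrow> ('v \<Rightarrow> int) \<Rightarrow> int" where
  "Delta V m u v D = rank V m D - rank V m (twist D u v (-1) 0)
     - rank V m (twist D u v 0 (-1)) + rank V m (twist D u v (-1) (-1))"

definition submodular :: "'v set \<Rightarrow> ('v \<Rightarrow> 'v \<Rightarrow> nat) \<Rightarrow> 'v \<Rightarrow> 'v \<Rightarrow> ('v \<Rightarrow> int) \<Rightarrow> bool" where
  "submodular V m u v D \<longleftrightarrow> (\<forall>a b. 0 \<le> Delta V m u v (twist D u v a b))"

definition transmission_perm ::
  "'v set \<Rightarrow> ('v \<Rightarrow> 'v \<Rightarrow> nat) \<Rightarrow> 'v \<Rightarrow> 'v \<Rightarrow> ('v \<Rightarrow> int) \<Rightarrow> int \<Rightarrow> int" where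
  "transmission_perm V m u v D = (THE \<tau>. bij \<tau> \<and>
     (\<forall>a b. Delta V m u v (twist D u v a (- b)) = (if \<tau> b = a then 1 else 0)))"

definition sci_pairs :: "(int \<Rightarrow> int) \<Rightarrow> (int \<times> int) set" where
  "sci_pairs \<alpha> = {(x, y). x < y \<and> 0 < \<alpha> x \<and> \<alpha> y \<le> 0}"

definition sci :: "(int \<Rightarrow> int) \<Rightarrow> nat" where
  "sci \<alpha> = card (sci_pairs \<alpha>)"

definition s_seq :: "'v set \<Rightarrow> ('v \<Rightarrow> 'v \<Rightarrow> nat) \<Rightarrow> ('v \<Rightarrow> int) \<Rightarrow> 'v \<Rightarrow> nat \<Rightarrow> int" where
  "s_seq V m D v i = (LEAST l::int. int i \<le> rank V m (\<lambda>x. D x + l * vtx v x))"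

definition wlambda :: "'v set \<Rightarrow> ('v \<Rightarrow> 'v \<Rightarrow> nat) \<Rightarrow> ('v \<Rightarrow> int) \<Rightarrow> 'v \<Rightarrow> nat \<Rightarrow> int" where
  "wlambda V m D v i = int i - s_seq V m D v i + genus V m - deg V D"

definition wsize :: "'v set \<Rightarrow> ('v \<Rightarrow> 'v \<Rightarrow> nat) \<Rightarrow> ('v \<Rightarrow> int) \<Rightarrow> 'v \<Rightarrow> int" where
  "wsize V m D v = (\<Sum>i\<in>{i. wlambda V m D v i \<noteq> 0}. wlambda V m D v i)"

end

theory Submission
  imports Defs
begin


lemma lap_add: "lap V m (\<lambda>x. f x + g x) x = lap V m f x + lap V m g x"
  unfolding lap_def by (auto simp: sum.distrib[symmetric] algebra_simps)

lemma lap_scale: "lap V m (\<lambda>x. c * f x) x = c * lap V m f x"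
  unfolding lap_def by (auto simp: sum_distrib_left algebra_simps)

lemma lap_neg: "lap V m (\<lambda>x. - f x) x = - lap V m f x"
  using lap_scale[of V m "-1" f x] by simp

lemma lap_zero: "lap V m (\<lambda>x. 0) x = 0"
  using lap_scale[of V m 0 "\<lambda>x. 0" x] by simp

lemma lap_out: "x \<notin> V \<Longrightarrow> lap V m f x = 0"
  unfolding lap_def by simp

lemma graphD:
  assumes "graph V m"
  shows "finite V" "V \<noteq> {}" "m x y = m y x" "m x x = 0" "0 < m x y \<Longrightarrow> x \<in> V"
    "0 < m x y \<Longrightarrow> y \<in> V"
    "x \<in> V \<Longrightarrow> y \<in> V \<Longrightarrow> (x, y) \<in> {(a, b). 0 < m a b}\<^sup>*"
  using assms unfolding graph_def by blast+

lemma lap_sum_zero: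
  assumes G: "graph V m"
  shows "(\<Sum>x\<in>V. lap V m f x) = 0"
proof -
  have "(\<Sum>x\<in>V. lap V m f x) = (\<Sum>x\<in>V. \<Sum>y\<in>V. int (m x y) * f x) - (\<Sum>x\<in>V. \<Sum>y\<in>V. int (m x y) * f y)"
    unfolding lap_def by (simp add: sum_subtractf[symmetric] algebra_simps)
  also have "(\<Sum>x\<in>V. \<Sum>y\<in>V. int (m x y) * f y) = (\<Sum>y\<in>V. \<Sum>x\<in>V. int (m x y) * f y)"
    by (rule sum.swap)
  also have "\<dots> = (\<Sum>x\<in>V. \<Sum>y\<in>V. int (m x y) * f x)"
    using graphD(3)[OF G] by simp
  finally show ?thesis by simp
qed

lemma deg_add: "deg V (\<lambda>x. D x + E x) = deg V D + deg V E"
  unfolding deg_def by (simp add: sum.distrib)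
lemma deg_diff: "deg V (\<lambda>x. D x - E x) = deg V D - deg V E"
  unfolding deg_def by (simp add: sum_subtractf)
lemma deg_scale: "deg V (\<lambda>x. c * D x) = c * deg V D"
  unfolding deg_def by (simp add: sum_distrib_left)
lemma deg_vtx: "finite V \<Longrightarrow> w \<in> V \<Longrightarrow> deg V (vtx w) = 1"
  unfolding deg_def vtx_def by simp

lemma lin_equiv_refl: "lin_equiv V m D D"
  unfolding lin_equiv_def using lap_zero by (intro exI[of _ "\<lambda>x. 0"]) auto

lemma lin_equiv_sym: "lin_equiv V m D D' \<Longrightarrow> lin_equiv V m D' D"
  unfolding lin_equiv_def
proof (elim exE)
  fix f assume "\<forall>x. D' x = D x - lap V m f x"
  then show "\<exists>f. \<forall>x. D x = D' x - lap V m f x"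
    by (intro exI[of _ "\<lambda>x. - f x"]) (simp add: lap_neg)
qed

lemma lin_equiv_trans: "lin_equiv V m D D' \<Longrightarrow> lin_equiv V m D' D'' \<Longrightarrow> lin_equiv V m D D''"
  unfolding lin_equiv_def
proof (elim exE)
  fix f g assume "\<forall>x. D' x = D x - lap V m f x" "\<forall>x. D'' x = D' x - lap V m g x"
  then show "\<exists>f. \<forall>x. D'' x = D x - lap V m f x"
    by (intro exI[of _ "\<lambda>x. f x + g x"]) (simp add: lap_add)
qed

lemma lin_equiv_deg:
  assumes G: "graph V m" and "lin_equiv V m D D'"
  shows "deg V D' = deg V D"
proof -
  obtain f where f: "\<And>x. D' x = D x - lap V m f x" using assms(2) unfolding lin_equiv_def by blast
  have "deg V D' = deg V D - (\<Sum>x\<in>V. lap V m f x)"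
    unfolding deg_def f by (simp add: sum_subtractf)
  then show ?thesis using lap_sum_zero[OF G] by simp
qed

lemma lin_equiv_divisor:
  assumes "divisor V D" "lin_equiv V m D D'" shows "divisor V D'"
proof -
  obtain f where f: "\<And>x. D' x = D x - lap V m f x" using assms(2) unfolding lin_equiv_def by blast
  show ?thesis using assms(1) unfolding divisor_def f by (simp add: lap_out)
qed

lemma effective_deg: "effective F \<Longrightarrow> 0 \<le> deg V F"
  unfolding effective_def deg_def by (simp add: sum_nonneg)

lemma equiv_eff_deg:
  assumes G: "graph V m" and "equiv_eff V m D" shows "0 \<le> deg V D"
proof -
  obtain F where "divisor V F" "effective F" "lin_equiv V m D F" using assms(2) unfolding equiv_eff_def by blast
  then show ?thesis using lin_equiv_deg[OF G] effective_deg by metis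
qed

lemma equiv_eff_lin: "lin_equiv V m D D' \<Longrightarrow> equiv_eff V m D' \<Longrightarrow> equiv_eff V m D"
  unfolding equiv_eff_def using lin_equiv_trans by blast

lemma equiv_eff_add:
  assumes "equiv_eff V m D" "effective E" "divisor V E"
  shows "equiv_eff V m (\<lambda>x. D x + E x)"
proof -
  obtain F f where F: "divisor V F" "effective F" "\<And>x. F x = D x - lap V m f x"
    using assms(1) unfolding equiv_eff_def lin_equiv_def by blast
  show ?thesis unfolding equiv_eff_def lin_equiv_def
    apply (rule exI[of _ "\<lambda>x. F x + E x"])
    using F assms(2,3) by (auto simp: divisor_def effective_def intro!: exI[of _ f])
qed

lemma effective_divisor_equiv_eff: "divisor V F \<Longrightarrow> effective F \<Longrightarrow> equiv_eff V m F"
  unfolding equiv_eff_def using lin_equiv_refl by blast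




lemma crossing:
  assumes G: "graph V m" and "B \<subseteq> V" "B \<noteq> {}" "B \<noteq> V"
  shows "\<exists>x\<in>B. \<exists>y\<in>V - B. 0 < m x y"
proof -
  obtain b where b: "b \<in> B" using assms by blast
  obtain c where c: "c \<in> V" "c \<notin> B" using assms by blast
  have "(b, c) \<in> {(a, b). 0 < m a b}\<^sup>*" using graphD(7)[OF G] b c assms(2) by blast
  then have "c \<notin> B \<longrightarrow> (\<exists>x\<in>B. \<exists>y. y \<notin> B \<and> 0 < m x y)"
  proof (induction rule: rtrancl_induct)
    case base then show ?case using b by blast
  next
    case (step y z)
    then show ?case by (cases "y \<in> B") auto
  qed
  then obtain x y where "x \<in> B" "y \<notin> B" "0 < m x y" using c by blast
  then show ?thesis using graphD(6)[OF G] by blast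
qed

lemma sum_B_pos:
  assumes "finite B" "y \<in> B" "0 < m x y"
  shows "1 \<le> (\<Sum>z\<in>B. int (m x z))"
proof -
  have "int (m x y) \<le> (\<Sum>z\<in>B. int (m x z))"
    by (rule member_le_sum) (use assms in auto)
  then show ?thesis using assms by linarith
qed

lemma step1_step:
  assumes G: "graph V m" and BV: "B \<subseteq> V"
    and P: "\<And>G. \<exists>G'. lin_equiv V m G G' \<and> (\<forall>x\<in>V - (B \<union> {x\<in>V - B. \<exists>y\<in>B. 0 < m x y}). 0 \<le> G' x)"
  shows "\<exists>G'. lin_equiv V m G G' \<and> (\<forall>x\<in>V - B. 0 \<le> G' x)"
proof -
  let ?N = "{x\<in>V - B. \<exists>y\<in>B. 0 < m x y}"
  have fin: "finite V" using graphD(1)[OF G] .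
  obtain G1 where G1: "lin_equiv V m G G1" "\<forall>x\<in>V - (B \<union> ?N). 0 \<le> G1 x" using P by blast
  define K where "K = (\<Sum>x\<in>?N. \<bar>G1 x\<bar>)"
  have K0: "0 \<le> K" unfolding K_def by (simp add: sum_nonneg)
  have KN: "x \<in> ?N \<Longrightarrow> \<bar>G1 x\<bar> \<le> K" for x
    unfolding K_def by (rule member_le_sum) (use fin in auto)
  define f where "f = (\<lambda>x. if x \<in> V - B then - K else 0)"
  have lapf: "lap V m f x = - K * (\<Sum>y\<in>B. int (m x y))" if x: "x \<in> V - B" for x
  proof -
    have "lap V m f x = (\<Sum>y\<in>V. (if y \<in> B then - K * int (m x y) else 0))"
      unfolding lap_def f_def using x by (auto intro!: sum.cong)
    also have "\<dots> = (\<Sum>y\<in>V \<inter> B. - K * int (m x y))"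
      by (simp add: sum.If_cases[OF fin])
    also have "V \<inter> B = B" using BV by blast
    finally show ?thesis by (simp only: sum_distrib_left)
  qed
  define G2 where "G2 = (\<lambda>x. G1 x - lap V m f x)"
  have "lin_equiv V m G1 G2" unfolding lin_equiv_def G2_def by blast
  then have eq: "lin_equiv V m G G2" using G1(1) lin_equiv_trans by blast
  have "0 \<le> G2 x" if x: "x \<in> V - B" for x
  proof -
    have s0: "0 \<le> (\<Sum>y\<in>B. int (m x y))" by (simp add: sum_nonneg)
    have G2x: "G2 x = G1 x + K * (\<Sum>y\<in>B. int (m x y))" unfolding G2_def using lapf[OF x] by simp
    show ?thesis
    proof (cases "x \<in> ?N")
      case True
      then obtain y where "y \<in> B" "0 < m x y" by blast
      then have "1 \<le> (\<Sum>y\<in>B. int (m x y))" using sum_B_pos[of B y m x] finite_subset[OF BV fin] by blast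
      then have "K \<le> K * (\<Sum>y\<in>B. int (m x y))" using K0 by (simp add: mult_le_cancel_left1)
      then show ?thesis using KN[OF True] G2x by linarith
    next
      case False
      then have "0 \<le> G1 x" using G1(2) x by blast
      then show ?thesis using G2x K0 s0 by simp
    qed
  qed
  then show ?thesis using eq by blast
qed

lemma step1:
  assumes G: "graph V m" and q: "q \<in> V"
  shows "\<exists>G'. lin_equiv V m G G' \<and> (\<forall>x\<in>V - {q}. 0 \<le> G' x)"
proof -
  have fin: "finite V" using graphD(1)[OF G] .
  have main: "\<forall>B. q \<in> B \<longrightarrow> B \<subseteq> V \<longrightarrow> card (V - B) = n \<longrightarrow> (\<forall>G. \<exists>G'. lin_equiv V m G G' \<and> (\<forall>x\<in>V - B. 0 \<le> G' x))" for n
  proof (induction n rule: less_induct)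
    case (less n)
    show ?case
    proof (intro allI impI)
      fix B G assume B: "q \<in> B" "B \<subseteq> V" "card (V - B) = n"
      let ?N = "{x\<in>V - B. \<exists>y\<in>B. 0 < m x y}"
      show "\<exists>G'. lin_equiv V m G G' \<and> (\<forall>x\<in>V - B. 0 \<le> G' x)"
      proof (cases "B = V")
        case True then show ?thesis using lin_equiv_refl by blast
      next
        case False
        then obtain x y where xy: "x \<in> B" "y \<in> V - B" "0 < m x y" using crossing[OF G B(2)] B(1) by blast
        then have yN: "y \<in> ?N" using graphD(3)[OF G, of x y] by auto
        have lt: "card (V - (B \<union> ?N)) < n"
          unfolding B(3)[symmetric] by (rule psubset_card_mono) (use fin yN in auto)
        have "\<forall>G. \<exists>G'. lin_equiv V m G G' \<and> (\<forall>x\<in>V - (B \<union> ?N). 0 \<le> G' x)"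
          apply (intro allI)
          apply (rule less.IH[OF lt, rule_format])
          using B by auto
        then show ?thesis using step1_step[OF G B(2)] by blast
      qed
    qed
  qed
  show ?thesis using main[of "card (V - {q})", rule_format, of "{q}"] q by simp
qed




definition SS :: "'v set \<Rightarrow> ('v \<Rightarrow> 'v \<Rightarrow> nat) \<Rightarrow> 'v set \<Rightarrow> int" where
  "SS V m B = (\<Sum>x\<in>B. \<Sum>y\<in>B. int (m x y))"

lemma SS_insert:
  assumes G: "graph V m" and "finite B" "x \<notin> B"
  shows "SS V m (insert x B) = SS V m B + 2 * (\<Sum>y\<in>B. int (m x y))"
proof -
  have "SS V m (insert x B) = (\<Sum>y\<in>insert x B. int (m x y)) + (\<Sum>z\<in>B. \<Sum>y\<in>insert x B. int (m z y))"
    unfolding SS_def using assms by simp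
  also have "\<dots> = (\<Sum>y\<in>B. int (m x y)) + (\<Sum>z\<in>B. int (m z x) + (\<Sum>y\<in>B. int (m z y)))"
    using assms graphD(4)[OF G, of x] by simp
  also have "\<dots> = 2 * (\<Sum>y\<in>B. int (m x y)) + SS V m B"
    unfolding SS_def using graphD(3)[OF G, of _ x] by (simp add: sum.distrib)
  finally show ?thesis by simp
qed

lemma SS_even:
  assumes G: "graph V m" and "finite B" shows "\<exists>k. SS V m B = 2 * k"
  using assms(2)
proof (induction B rule: finite_induct)
  case empty then show ?case by (simp add: SS_def)
next
  case (insert x F)
  then obtain k where "SS V m F = 2 * k" by blast
  then show ?case using SS_insert[OF G insert(1,2)] by (intro exI[of _ "k + (\<Sum>y\<in>F. int (m x y))"]) simp
qed

lemma two_edges: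
  assumes G: "graph V m" shows "2 * int (num_edges V m) = SS V m V"
proof -
  obtain k where k: "SS V m V = 2 * k" using SS_even[OF G graphD(1)[OF G]] by blast
  have "int (\<Sum>x\<in>V. \<Sum>y\<in>V. m x y) = SS V m V" unfolding SS_def by simp
  then have "int (num_edges V m) = SS V m V div 2" unfolding num_edges_def by (simp add: zdiv_int)
  then show ?thesis using k by simp
qed

lemma burning:
  assumes G: "graph V m" and q: "q \<in> V" and Gq: "Gd q \<le> -1"
    and noleg: "\<And>A. A \<subseteq> V - {q} \<Longrightarrow> A \<noteq> {} \<Longrightarrow> \<exists>x\<in>A. Gd x < (\<Sum>y\<in>V - A. int (m x y))"
  shows "2 * (\<Sum>x\<in>V. Gd x) \<le> SS V m V - 2 * int (card V)"
proof -
  have fin: "finite V" using graphD(1)[OF G] .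
  have "1 \<le> k \<Longrightarrow> k \<le> card V \<Longrightarrow> \<exists>B. q \<in> B \<and> B \<subseteq> V \<and> card B = k \<and> 2 * (\<Sum>x\<in>B. Gd x) \<le> SS V m B - 2 * int (card B)" for k
  proof (induction k)
    case 0 then show ?case by simp
  next
    case (Suc k)
    show ?case
    proof (cases "k = 0")
      case True
      then show ?thesis using q Gq by (intro exI[of _ "{q}"]) (simp add: SS_def graphD(4)[OF G])
    next
      case False
      then obtain B where B: "q \<in> B" "B \<subseteq> V" "card B = k" "2 * (\<Sum>x\<in>B. Gd x) \<le> SS V m B - 2 * int (card B)"
        using Suc by auto
      have finB: "finite B" using B(2) fin finite_subset by blast
      have "B \<noteq> V" using B(3) Suc(3) by auto
      then have "V - B \<subseteq> V - {q}" "V - B \<noteq> {}" using B by auto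
      then obtain x where x: "x \<in> V - B" "Gd x < (\<Sum>y\<in>V - (V - B). int (m x y))" using noleg by blast
      have VB: "V - (V - B) = B" using B(2) by blast
      have "SS V m (insert x B) = SS V m B + 2 * (\<Sum>y\<in>B. int (m x y))"
        using SS_insert[OF G finB] x(1) by blast
      moreover have "(\<Sum>z\<in>insert x B. Gd z) = Gd x + (\<Sum>z\<in>B. Gd z)" using finB x(1) by simp
      moreover have "card (insert x B) = Suc k" using finB x(1) B(3) by simp
      ultimately show ?thesis using B x VB by (intro exI[of _ "insert x B"]) auto
    qed
  qed
  from this[of "card V"] obtain B where B: "B \<subseteq> V" "card B = card V" "2 * (\<Sum>x\<in>B. Gd x) \<le> SS V m B - 2 * int (card B)"
    using q fin by (metis card_gt_0_iff empty_iff le_refl less_eq_Suc_le One_nat_def)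
  have "B = V" using card_subset_eq[OF fin B(1,2)] .
  then show ?thesis using B by simp
qed




lemma kernel:
  assumes G: "graph V m" and L: "\<And>x. x \<in> V \<Longrightarrow> lap V m g x = 0" and x: "x \<in> V" and y: "y \<in> V"
  shows "g x = g y"
proof -
  have fin: "finite V" and ne: "V \<noteq> {}" using graphD[OF G] by auto
  define M where "M = Max (g ` V)"
  have gM: "z \<in> V \<Longrightarrow> g z \<le> M" for z unfolding M_def using fin by simp
  obtain z0 where z0: "z0 \<in> V" "g z0 = M" proof -
    have "M \<in> g ` V" unfolding M_def using Max_in[of "g ` V"] fin ne by blast
    then show ?thesis using that by blast
  qed
  define A where "A = {z\<in>V. g z = M}"
  have "A = V"
  proof (rule ccontr)
    assume "A \<noteq> V"
    moreover have "A \<subseteq> V" "A \<noteq> {}" using z0 unfolding A_def by auto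
    ultimately obtain a b where ab: "a \<in> A" "b \<in> V - A" "0 < m a b" using crossing[OF G] by blast
    have "0 < lap V m g a"
      unfolding lap_def using ab(1) A_def
    proof (simp, intro sum_pos2[OF fin, of b])
      show "b \<in> V" using ab by simp
      have "g b < M" using ab gM unfolding A_def by force
      then show "0 < int (m a b) * (M - g b)" using ab(3) by simp
      show "\<And>i. i \<in> V \<Longrightarrow> 0 \<le> int (m a i) * (M - g i)" using gM by simp
    qed
    then show False using L ab(1) A_def by auto
  qed
  then have "g x = M" "g y = M" using x y unfolding A_def by blast+
  then show ?thesis by simp
qed

lemma R1:
  assumes G: "graph V m" and F: "divisor V F" and dF: "genus V m \<le> deg V F"
  shows "equiv_eff V m F"
proof -
  have fin: "finite V" and ne: "V \<noteq> {}" using graphD[OF G] by auto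
  obtain q where q: "q \<in> V" using ne by blast
  obtain G0 where G0: "lin_equiv V m F G0" "\<forall>x\<in>V - {q}. 0 \<le> G0 x" using step1[OF G q] by blast
  have G0d: "divisor V G0" using lin_equiv_divisor[OF F G0(1)] .
  define Phi where "Phi = {f. f q = 0 \<and> (\<forall>x. 0 \<le> f x) \<and> (\<forall>x. x \<notin> V \<longrightarrow> f x = 0)
      \<and> (\<forall>x\<in>V - {q}. 0 \<le> G0 x - lap V m f x)}"
  define img where "img = (\<lambda>f x. G0 x - lap V m f x)"
  have inj: "inj_on img Phi"
  proof (rule inj_onI)
    fix f1 f2 assume f1: "f1 \<in> Phi" and f2: "f2 \<in> Phi" and e: "img f1 = img f2"
    have l: "lap V m f1 x = lap V m f2 x" for x using fun_cong[OF e, of x] unfolding img_def by simp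
    have l0: "lap V m (\<lambda>x. f1 x + - f2 x) x = 0" for x using lap_add[of V m f1 "\<lambda>x. - f2 x" x] lap_neg[of V m f2 x] l by simp
    show "f1 = f2"
    proof
      fix x show "f1 x = f2 x"
      proof (cases "x \<in> V")
        case True
        have "f1 x + - f2 x = f1 q + - f2 q" using kernel[OF G, of "\<lambda>x. f1 x + - f2 x"] l0 True q by blast
        then show ?thesis using f1 f2 unfolding Phi_def by simp
      next
        case False then show ?thesis using f1 f2 unfolding Phi_def by simp
      qed
    qed
  qed
  define lo where "lo = min 0 (G0 q)"
  define hi where "hi = \<bar>deg V G0\<bar> + \<bar>G0 q\<bar>"
  have sub: "img ` Phi \<subseteq> {H. \<forall>x. (x \<in> V \<longrightarrow> H x \<in> {lo..hi}) \<and> (x \<notin> V \<longrightarrow> H x = 0)}"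
  proof
    fix H assume "H \<in> img ` Phi"
    then obtain f where f: "f \<in> Phi" and H: "H = img f" by blast
    have Hx: "H x = G0 x - lap V m f x" for x unfolding H img_def by simp
    have Hout: "x \<notin> V \<Longrightarrow> H x = 0" for x using G0d unfolding Hx divisor_def by (simp add: lap_out)
    have Hnn: "x \<in> V - {q} \<Longrightarrow> 0 \<le> H x" for x using f unfolding Phi_def Hx by blast
    have sumH: "(\<Sum>x\<in>V. H x) = deg V G0"
      unfolding Hx deg_def by (simp add: sum_subtractf lap_sum_zero[OF G])
    have lapq: "lap V m f q \<le> 0"
      unfolding lap_def using q f unfolding Phi_def by (simp add: sum_nonpos mult_nonneg_nonneg)
    have Hq: "G0 q \<le> H q" using lapq Hx by simp
    have split: "(\<Sum>x\<in>V. H x) = H q + (\<Sum>x\<in>V - {q}. H x)" using sum.remove[OF fin q] .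
    have r0: "0 \<le> (\<Sum>x\<in>V - {q}. H x)" using Hnn by (intro sum_nonneg) blast
    have rx: "H x \<le> (\<Sum>x\<in>V - {q}. H x)" if "x \<in> V - {q}" for x
      by (rule member_le_sum) (use that Hnn fin in auto)
    show "H \<in> {H. \<forall>x. (x \<in> V \<longrightarrow> H x \<in> {lo..hi}) \<and> (x \<notin> V \<longrightarrow> H x = 0)}"
    proof (intro CollectI allI conjI impI)
      fix x assume xV: "x \<in> V"
      show "H x \<in> {lo..hi}"
      proof (cases "x = q")
        case True then show ?thesis using Hq split sumH r0 unfolding lo_def hi_def by auto
      next
        case False
        then have "0 \<le> H x" "H x \<le> (\<Sum>x\<in>V - {q}. H x)" using Hnn rx xV by auto
        then show ?thesis using Hq split sumH unfolding lo_def hi_def by auto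
      qed
    next
      fix x assume "x \<notin> V" then show "H x = 0" using Hout by simp
    qed
  qed
  have "finite {H::'a\<Rightarrow>int. \<forall>x. (x \<in> V \<longrightarrow> H x \<in> {lo..hi}) \<and> (x \<notin> V \<longrightarrow> H x = 0)}"
    using finite_set_of_finite_funs[OF fin, of "{lo..hi}" 0] by simp
  then have finPhi: "finite Phi" using finite_imageD[OF finite_subset[OF sub] inj] by blast
  have z: "(\<lambda>x. 0) \<in> Phi" unfolding Phi_def using G0(2) by (simp add: lap_zero)
  define M where "M = Max ((\<lambda>f. \<Sum>x\<in>V. f x) ` Phi)"
  obtain f where f: "f \<in> Phi" "(\<Sum>x\<in>V. f x) = M"
  proof -
    have "M \<in> (\<lambda>f. \<Sum>x\<in>V. f x) ` Phi" unfolding M_def using Max_in[of "(\<lambda>f. \<Sum>x\<in>V. f x) ` Phi"] finPhi z by blast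
    then show ?thesis using that by blast
  qed
  have fmax: "f' \<in> Phi \<Longrightarrow> (\<Sum>x\<in>V. f' x) \<le> M" for f' unfolding M_def using finPhi by simp
  define H where "H = (\<lambda>x. G0 x - lap V m f x)"
  have "lin_equiv V m G0 H" unfolding H_def lin_equiv_def by blast
  then have HF: "lin_equiv V m F H" using G0(1) lin_equiv_trans by blast
  have Hd: "divisor V H" using lin_equiv_divisor[OF F HF] .
  have Hnn: "x \<in> V - {q} \<Longrightarrow> 0 \<le> H x" for x using f unfolding Phi_def H_def by blast
  show ?thesis
  proof (cases "0 \<le> H q")
    case True
    have "effective H" unfolding effective_def
    proof
      fix x show "0 \<le> H x"
        using Hd Hnn True unfolding divisor_def by (cases "x \<in> V"; cases "x = q") auto
    qed
    then show ?thesis unfolding equiv_eff_def using Hd HF by blast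
  next
    case False
    then have Hq: "H q \<le> -1" by simp
    show ?thesis
    proof (cases "\<forall>A. A \<subseteq> V - {q} \<longrightarrow> A \<noteq> {} \<longrightarrow> (\<exists>x\<in>A. H x < (\<Sum>y\<in>V - A. int (m x y)))")
      case True
      have "2 * (\<Sum>x\<in>V. H x) \<le> SS V m V - 2 * int (card V)"
        using burning[OF G q, of H] Hq True by blast
      moreover have "(\<Sum>x\<in>V. H x) = deg V F" using lin_equiv_deg[OF G HF] unfolding deg_def by simp
      moreover have "2 * int (num_edges V m) = SS V m V" using two_edges[OF G] .
      ultimately have False using dF unfolding genus_def by linarith
      then show ?thesis ..
    next
      case False
      then obtain A where A0: "A \<subseteq> V - {q}" "A \<noteq> {}" "\<forall>x\<in>A. \<not> H x < (\<Sum>y\<in>V - A. int (m x y))"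
        by blast
      then have A: "A \<subseteq> V - {q}" "A \<noteq> {}" "\<And>x. x \<in> A \<Longrightarrow> (\<Sum>y\<in>V - A. int (m x y)) \<le> H x"
        by (auto simp: not_less)
      define ind where "ind = (\<lambda>x. if x \<in> A then (1::int) else 0)"
      define f' where "f' = (\<lambda>x. f x + ind x)"
      have lapA: "lap V m ind x = (\<Sum>y\<in>V - A. int (m x y))" if "x \<in> A" for x
      proof -
        have "lap V m ind x = (\<Sum>y\<in>V. if y \<in> A then 0 else int (m x y))"
          unfolding lap_def ind_def using that A(1) by (auto intro!: sum.cong)
        also have "\<dots> = (\<Sum>y\<in>V \<inter> - A. int (m x y))" by (simp add: sum.If_cases[OF fin])
        also have "V \<inter> - A = V - A" by blast
        finally show ?thesis .
      qed
      have lapB: "lap V m ind x \<le> 0" if "x \<in> V - A" for x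
        unfolding lap_def ind_def using that by (auto intro!: sum_nonpos)
      have "f' \<in> Phi"
        unfolding Phi_def
      proof (intro CollectI conjI allI impI ballI)
        show "f' q = 0" using f A(1) unfolding Phi_def f'_def ind_def by auto
        fix x
        show "0 \<le> f' x" using f unfolding Phi_def f'_def ind_def by (simp add: add_nonneg_nonneg)
        show "x \<notin> V \<Longrightarrow> f' x = 0" using f A(1) unfolding Phi_def f'_def ind_def by auto
      next
        fix x assume x: "x \<in> V - {q}"
        have e: "G0 x - lap V m f' x = H x - lap V m ind x" unfolding f'_def H_def lap_add by simp
        show "0 \<le> G0 x - lap V m f' x"
        proof (cases "x \<in> A")
          case True then show ?thesis using e lapA A(3) by simp
        next
          case False then show ?thesis using e lapB Hnn x by force
        qed
      qed
      moreover have "(\<Sum>x\<in>V. f' x) = M + int (card A)"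
      proof -
        have "(\<Sum>x\<in>V. ind x) = (\<Sum>x\<in>V \<inter> A. 1)" unfolding ind_def by (simp add: sum.If_cases[OF fin])
        also have "V \<inter> A = A" using A(1) by blast
        finally show ?thesis unfolding f'_def using f(2) by (simp add: sum.distrib)
      qed
      moreover have "0 < card A"
      proof -
        have "finite A" using A(1) fin finite_subset[of A V] by blast
        then show ?thesis using A(2) by (simp add: card_gt_0_iff)
      qed
      ultimately have False using fmax[of f'] by simp
      then show ?thesis ..
    qed
  qed
qed




lemma R2:
  assumes G: "graph V m"
  shows "\<exists>\<nu>. divisor V \<nu> \<and> deg V \<nu> = genus V m - 1 \<and> \<not> equiv_eff V m \<nu>"
proof -
  have fin: "finite V" using graphD(1)[OF G] .
  obtain h :: "'a \<Rightarrow> nat" and n where "h ` V = {i. i < n}" and inj: "inj_on h V"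
    using finite_imp_inj_to_nat_seg[OF fin] by blast
  define T where "T x = (\<Sum>y\<in>V. if h y < h x then int (m x y) else 0)" for x
  define \<nu> where "\<nu> = (\<lambda>x. if x \<in> V then T x - 1 else 0)"
  have dv: "divisor V \<nu>" unfolding divisor_def \<nu>_def by simp
  have Q: "\<exists>x\<in>A. \<nu> x < (\<Sum>y\<in>V - A. int (m x y))" if A: "A \<subseteq> V" "A \<noteq> {}" for A
  proof -
    have finA: "finite A" using A fin finite_subset by blast
    have "Min (h ` A) \<in> h ` A" using finA A(2) by simp
    then obtain x where x: "x \<in> A" "h x = Min (h ` A)" by (metis imageE)
    have hx: "y \<in> A \<Longrightarrow> h x \<le> h y" for y using x finA by simp
    have "T x \<le> (\<Sum>y\<in>V. if y \<in> A then 0 else int (m x y))"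
      unfolding T_def by (rule sum_mono) (use hx in fastforce)
    also have "\<dots> = (\<Sum>y\<in>V \<inter> - A. int (m x y))" by (simp add: sum.If_cases[OF fin])
    also have "V \<inter> - A = V - A" by blast
    finally show ?thesis using x A unfolding \<nu>_def by force
  qed
  have ne: "\<not> equiv_eff V m \<nu>"
  proof
    assume "equiv_eff V m \<nu>"
    then obtain F f where F: "effective F" "\<And>x. F x = \<nu> x - lap V m f x"
      unfolding equiv_eff_def lin_equiv_def by blast
    have neV: "V \<noteq> {}" using graphD(2)[OF G] .
    define M where "M = Max (f ` V)"
    have fM: "z \<in> V \<Longrightarrow> f z \<le> M" for z unfolding M_def using fin by simp
    have "M \<in> f ` V" unfolding M_def using Max_in fin neV by blast
    then obtain z0 where z0: "z0 \<in> V" "f z0 = M" by blast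
    define A where "A = {z\<in>V. f z = M}"
    have "A \<subseteq> V" "A \<noteq> {}" using z0 unfolding A_def by auto
    then obtain x where x: "x \<in> A" "\<nu> x < (\<Sum>y\<in>V - A. int (m x y))" using Q by blast
    have "(\<Sum>y\<in>V - A. int (m x y)) = (\<Sum>y\<in>V. if y \<in> A then 0 else int (m x y))"
    proof -
      have "(\<Sum>y\<in>V. if y \<in> A then 0 else int (m x y)) = (\<Sum>y\<in>V \<inter> - A. int (m x y))"
        by (simp add: sum.If_cases[OF fin])
      also have "V \<inter> - A = V - A" by blast
      finally show ?thesis by simp
    qed
    also have "\<dots> \<le> lap V m f x"
      unfolding lap_def using x(1) unfolding A_def
    proof (simp, intro sum_mono)
      fix y assume y: "y \<in> V"
      show "(if f y = M then 0 else int (m x y)) \<le> int (m x y) * (M - f y)"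
      proof (cases "f y = M")
        case False then have "1 \<le> M - f y" using fM[OF y] by simp
        then show ?thesis using False by (simp add: mult_le_cancel_left1)
      qed simp
    qed
    finally have "F x < 0" using x(2) F(2)[of x] by simp
    then show False using F(1) unfolding effective_def by (meson not_less)
  qed
  have SSeq: "SS V m V = 2 * (\<Sum>x\<in>V. T x)"
  proof -
    have pt: "int (m x y) = (if h y < h x then int (m x y) else 0) + (if h x < h y then int (m x y) else 0)"
      if "x \<in> V" "y \<in> V" for x y
    proof (cases "h x = h y")
      case True have "x = y" by (rule inj_onD[OF inj True that])
      then show ?thesis using graphD(4)[OF G] by simp
    qed auto
    have "SS V m V = (\<Sum>x\<in>V. T x) + (\<Sum>x\<in>V. \<Sum>y\<in>V. if h x < h y then int (m x y) else 0)"
      unfolding SS_def T_def sum.distrib[symmetric]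
      by (intro sum.cong refl) (use pt in \<open>simp add: sum.distrib[symmetric]\<close>)
    also have "(\<Sum>x\<in>V. \<Sum>y\<in>V. if h x < h y then int (m x y) else 0) = (\<Sum>y\<in>V. \<Sum>x\<in>V. if h x < h y then int (m x y) else 0)"
      by (rule sum.swap)
    also have "\<dots> = (\<Sum>x\<in>V. T x)" unfolding T_def by (intro sum.cong refl) (metis graphD(3)[OF G])
    finally show ?thesis by simp
  qed
  have "deg V \<nu> = (\<Sum>x\<in>V. T x) - int (card V)"
    unfolding deg_def \<nu>_def by (simp add: sum_subtractf)
  then have "deg V \<nu> = genus V m - 1" using two_edges[OF G] SSeq unfolding genus_def by linarith
  then show ?thesis using dv ne by blast
qed

lemma vtx_divisor: "w \<in> V \<Longrightarrow> divisor V (\<lambda>x. c * vtx w x)"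
  unfolding divisor_def vtx_def by auto

lemma genus_nonneg:
  assumes G: "graph V m" shows "0 \<le> genus V m"
proof (rule ccontr)
  assume "\<not> 0 \<le> genus V m"
  obtain q where q: "q \<in> V" using graphD(2)[OF G] by blast
  have d: "divisor V (\<lambda>x. - vtx q x)" using vtx_divisor[OF q, of "-1"] by simp
  have dd: "deg V (\<lambda>x. - vtx q x) = -1" unfolding deg_def vtx_def using graphD(1)[OF G] q by (simp add: sum_negf)
  then have "equiv_eff V m (\<lambda>x. - vtx q x)" using R1[OF G d] \<open>\<not> 0 \<le> genus V m\<close> by simp
  then show False using equiv_eff_deg[OF G] dd by fastforce
qed

lemma rank_neg:
  assumes G: "graph V m" and "deg V D < 0" shows "rank V m D = -1"
  using equiv_eff_deg[OF G] assms(2) unfolding rank_def by force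

lemma divisor_diff: "divisor V D \<Longrightarrow> divisor V E \<Longrightarrow> divisor V (\<lambda>x. D x - E x)"
  unfolding divisor_def by simp
lemma divisor_add: "divisor V D \<Longrightarrow> divisor V E \<Longrightarrow> divisor V (\<lambda>x. D x + E x)"
  unfolding divisor_def by simp

lemma rank_big:
  assumes G: "graph V m" and D: "divisor V D" and big: "2 * genus V m \<le> deg V D"
  shows "rank V m D = deg V D - genus V m"
proof -
  let ?g = "genus V m" and ?n = "deg V D"
  have g0: "0 \<le> ?g" using genus_nonneg[OF G] .
  have fin: "finite V" using graphD(1)[OF G] .
  obtain q where q: "q \<in> V" using graphD(2)[OF G] by blast
  have ee: "equiv_eff V m D" using R1[OF G D] big g0 by simp
  let ?P = "\<lambda>r::int. 0 \<le> r \<and> (\<forall>E. divisor V E \<and> effective E \<and> deg V E = r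
         \<longrightarrow> equiv_eff V m (\<lambda>x. D x - E x))"
  have P: "?P (?n - ?g)"
  proof (intro conjI allI impI)
    show "0 \<le> ?n - ?g" using big g0 by simp
    fix E assume E: "divisor V E \<and> effective E \<and> deg V E = ?n - ?g"
    have "deg V (\<lambda>x. D x - E x) = ?g" using E deg_diff[of V D E] by simp
    then show "equiv_eff V m (\<lambda>x. D x - E x)"
      using R1[OF G divisor_diff[OF D]] E by simp
  qed
  have up: "r \<le> ?n - ?g" if Pr: "?P r" for r
  proof (rule ccontr)
    assume "\<not> r \<le> ?n - ?g"
    then have rb: "?n - ?g + 1 \<le> r" by simp
    obtain \<nu> where nu: "divisor V \<nu>" "deg V \<nu> = ?g - 1" "\<not> equiv_eff V m \<nu>" using R2[OF G] by blast
    have "equiv_eff V m (\<lambda>x. D x - \<nu> x)"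
      by (rule R1[OF G divisor_diff[OF D nu(1)]]) (use nu big in \<open>simp add: deg_diff\<close>)
    then obtain F f where F: "divisor V F" "effective F" "\<And>x. F x = (D x - \<nu> x) - lap V m f x"
      unfolding equiv_eff_def lin_equiv_def by blast
    have "lin_equiv V m (\<lambda>x. D x - \<nu> x) F" unfolding lin_equiv_def using F(3) by blast
    then have "deg V F = deg V (\<lambda>x. D x - \<nu> x)" using lin_equiv_deg[OF G] by blast
    then have dF: "deg V F = ?n - ?g + 1" using nu(2) deg_diff[of V D \<nu>] by simp
    define c where "c = r - (?n - ?g + 1)"
    have c0: "0 \<le> c" using rb c_def by simp
    define E where "E = (\<lambda>x. F x + c * vtx q x)"
    have Ed: "divisor V E" unfolding E_def using divisor_add[OF F(1) vtx_divisor[OF q]] .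
    have Ee: "effective E" unfolding E_def using F(2) c0 unfolding effective_def vtx_def by simp
    have dE: "deg V E = r" unfolding E_def deg_add deg_scale deg_vtx[OF fin q] dF c_def by simp
    have "equiv_eff V m (\<lambda>x. D x - E x)" using Pr Ed Ee dE by blast
    then have "equiv_eff V m (\<lambda>x. (D x - E x) + c * vtx q x)"
      by (rule equiv_eff_add) (use c0 vtx_divisor[OF q] in \<open>auto simp: effective_def vtx_def\<close>)
    moreover have "(\<lambda>x. (D x - E x) + c * vtx q x) = (\<lambda>x. D x - F x)" unfolding E_def by auto
    ultimately have e1: "equiv_eff V m (\<lambda>x. D x - F x)" by simp
    have "lin_equiv V m \<nu> (\<lambda>x. D x - F x)"
      unfolding lin_equiv_def using F(3) lap_neg[of V m f] by (intro exI[of _ "\<lambda>x. - f x"]) simp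
    then have "equiv_eff V m \<nu>" using equiv_eff_lin e1 by blast
    then show False using nu(3) by blast
  qed
  have "(GREATEST r. ?P r) = ?n - ?g" using Greatest_equality[where P="?P", OF P up] by blast
  then show ?thesis unfolding rank_def using ee by simp
qed




lemma const_int:
  fixes \<phi> :: "int \<Rightarrow> 'b"
  assumes "\<And>a. \<phi> (a + 1) = \<phi> a"
  shows "\<phi> a = \<phi> a0"
proof (induction a rule: int_induct[where k = a0])
  case base then show ?case by simp
next
  case (step1 i) then show ?case using assms by simp
next
  case (step2 i) then show ?case using assms[of "i - 1"] by simp
qed

lemma tele:
  fixes h :: "int \<Rightarrow> int"
  shows "(\<Sum>a\<in>{A..A + int k}. h a - h (a - 1)) = h (A + int k) - h (A - 1)"
proof (induction k)
  case 0 then show ?case by simp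
next
  case (Suc k)
  have e: "{A..A + int (Suc k)} = insert (A + int (Suc k)) {A..A + int k}" by auto
  show ?case unfolding e using Suc by simp
qed

lemma one_hot:
  fixes h :: "'a \<Rightarrow> int"
  assumes "finite I" "\<And>i. i \<in> I \<Longrightarrow> 0 \<le> h i" "(\<Sum>i\<in>I. h i) = 1"
  shows "\<exists>i\<in>I. h i = 1 \<and> (\<forall>j\<in>I. j \<noteq> i \<longrightarrow> h j = 0)"
proof -
  have "\<exists>i\<in>I. h i \<noteq> 0" using assms(3) by (metis (mono_tags, lifting) sum.neutral zero_neq_one)
  then obtain i where i: "i \<in> I" "h i \<noteq> 0" by blast
  have s: "(\<Sum>j\<in>I. h j) = h i + (\<Sum>j\<in>I - {i}. h j)" using sum.remove[OF assms(1) i(1)] .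
  have r0: "0 \<le> (\<Sum>j\<in>I - {i}. h j)" using assms(2) by (intro sum_nonneg) blast
  have hi: "h i = 1" using s r0 assms(2)[OF i(1)] i(2) assms(3) by linarith
  then have "(\<Sum>j\<in>I - {i}. h j) = 0" using s assms(3) by simp
  then have "\<forall>j\<in>I - {i}. h j = 0" using sum_nonneg_eq_0_iff[of "I - {i}" h] assms(1,2) by blast
  then show ?thesis using i(1) hi by blast
qed

definition RR where "RR V m u v D a b = rank V m (twist D u v a (- b))"
definition DD where "DD V m u v D a b = Delta V m u v (twist D u v a (- b))"

lemma twist_twist: "twist (twist D u v a b) u v a' b' = twist D u v (a + a') (b + b')"
  unfolding twist_def by (auto simp: algebra_simps)

lemma twist_divisor: "divisor V D \<Longrightarrow> u \<in> V \<Longrightarrow> v \<in> V \<Longrightarrow> divisor V (twist D u v a b)"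
  unfolding divisor_def twist_def vtx_def by auto

lemma deg_twist: "finite V \<Longrightarrow> u \<in> V \<Longrightarrow> v \<in> V \<Longrightarrow> deg V (twist D u v a b) = deg V D + a + b"
  unfolding twist_def deg_add[symmetric] using deg_add deg_scale deg_vtx by (metis mult.right_neutral)

definition cset :: "(int \<Rightarrow> int) \<Rightarrow> int \<Rightarrow> int set" where
  "cset t y = {x. x < y \<and> 0 < t x}"

definition bbsel :: "(int \<Rightarrow> int) \<Rightarrow> (int \<Rightarrow> int) \<Rightarrow> nat \<Rightarrow> int" where
  "bbsel t f i = (SOME y. t y \<le> 0 \<and> f y = int i)"

context
  fixes V :: "'v set" and m :: "'v \<Rightarrow> 'v \<Rightarrow> nat" and u v :: 'v and D :: "'v \<Rightarrow> int"
  assumes G: "graph V m" and uV: "u \<in> V" and vV: "v \<in> V"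
    and Dd: "divisor V D" and sub: "submodular V m u v D"
begin

abbreviation "R \<equiv> RR V m u v D"
abbreviation "\<Delta> \<equiv> DD V m u v D"
abbreviation "dd \<equiv> deg V D"
abbreviation "gg \<equiv> genus V m"

lemma fin: "finite V" using graphD(1)[OF G] .

lemma Rneg: "dd + a - b < 0 \<Longrightarrow> R a b = -1"
  unfolding RR_def by (rule rank_neg[OF G]) (simp add: deg_twist[OF fin uV vV])

lemma Rbig: "2 * gg \<le> dd + a - b \<Longrightarrow> R a b = dd + a - b - gg"
  unfolding RR_def using rank_big[OF G twist_divisor[OF Dd uV vV]] deg_twist[OF fin uV vV] by simp

lemma Delta_eq: "\<Delta> a b = R a b - R (a - 1) b - R a (b + 1) + R (a - 1) (b + 1)"
  unfolding DD_def RR_def Delta_def twist_twist by (simp add: algebra_simps)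

lemma Dnn: "0 \<le> \<Delta> a b"
  using sub unfolding submodular_def DD_def by blast

lemma Dzero: "dd + a - b < 0 \<or> 2 * gg + 2 \<le> dd + a - b \<Longrightarrow> \<Delta> a b = 0"
  unfolding Delta_eq using Rneg Rbig by auto

lemma gg0: "0 \<le> gg" using genus_nonneg[OF G] .

lemma colsum: "(\<Sum>a\<in>{b - dd..b - dd + int (nat (2 * gg + 1))}. \<Delta> a b) = 1"
proof -
  have "(\<Sum>a\<in>{b - dd..b - dd + int (nat (2 * gg + 1))}. \<Delta> a b)
      = (\<Sum>a\<in>{b - dd..b - dd + int (nat (2 * gg + 1))}. (R a b - R a (b+1)) - (R (a - 1) b - R (a - 1) (b + 1)))"
    unfolding Delta_eq by (simp add: algebra_simps)
  also have "\<dots> = (R (b - dd + int (nat (2 * gg + 1))) b - R (b - dd + int (nat (2 * gg + 1))) (b+1))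
        - (R (b - dd - 1) b - R (b - dd - 1) (b + 1))"
    by (rule tele[of "\<lambda>a. R a b - R a (b+1)"])
  also have "\<dots> = 1" using gg0 Rneg Rbig by simp
  finally show ?thesis .
qed

lemma rowsum: "(\<Sum>b\<in>{a + dd - 2 * gg - 1..a + dd - 2 * gg - 1 + int (nat (2 * gg + 1))}. \<Delta> a b) = 1"
proof -
  let ?W = "\<lambda>b. R a b - R (a - 1) b"
  let ?B = "a + dd - 2 * gg - 1"
  let ?k = "int (nat (2 * gg + 1))"
  have "(\<Sum>b\<in>{?B..?B + ?k}. \<Delta> a b) = (\<Sum>b\<in>{?B..?B + ?k}. (\<lambda>b. - ?W (b + 1)) b - (\<lambda>b. - ?W (b + 1)) (b - 1))"
    unfolding Delta_eq by (intro sum.cong refl) (simp add: algebra_simps)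
  also have "\<dots> = ((- ?W (?B + ?k + 1)) - (- ?W (?B - 1 + 1)))"
    using tele[of "\<lambda>b. - ?W (b + 1)" ?B "nat (2 * gg + 1)"] by simp
  also have "\<dots> = 1" using gg0 Rneg Rbig by simp
  finally show ?thesis .
qed

lemma col_unique: "\<exists>a. \<Delta> a b = 1 \<and> (\<forall>a'. a' \<noteq> a \<longrightarrow> \<Delta> a' b = 0)"
proof -
  let ?I = "{b - dd..b - dd + int (nat (2 * gg + 1))}"
  obtain a where a: "a \<in> ?I" "\<Delta> a b = 1" "\<forall>j\<in>?I. j \<noteq> a \<longrightarrow> \<Delta> j b = 0"
    using one_hot[of ?I "\<lambda>a. \<Delta> a b"] colsum Dnn by auto
  have "\<Delta> a' b = 0" if "a' \<noteq> a" for a'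
  proof (cases "a' \<in> ?I")
    case True then show ?thesis using a that by blast
  next
    case False then show ?thesis using gg0 by (intro Dzero) auto
  qed
  then show ?thesis using a by blast
qed

lemma row_unique: "\<exists>b. \<Delta> a b = 1 \<and> (\<forall>b'. b' \<noteq> b \<longrightarrow> \<Delta> a b' = 0)"
proof -
  let ?I = "{a + dd - 2 * gg - 1..a + dd - 2 * gg - 1 + int (nat (2 * gg + 1))}"
  obtain b where b: "b \<in> ?I" "\<Delta> a b = 1" "\<forall>j\<in>?I. j \<noteq> b \<longrightarrow> \<Delta> a j = 0"
    using one_hot[of ?I "\<lambda>b. \<Delta> a b"] rowsum Dnn by auto
  have "\<Delta> a b' = 0" if "b' \<noteq> b" for b'
  proof (cases "b' \<in> ?I")
    case True then show ?thesis using b that by blast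
  next
    case False then show ?thesis using gg0 by (intro Dzero) auto
  qed
  then show ?thesis using b by blast
qed


lemma tau_ex: "\<exists>tau. bij tau \<and> (\<forall>a b. \<Delta> a b = (if tau b = a then 1 else 0))"
proof -
  have "\<forall>b. \<exists>a. \<Delta> a b = 1 \<and> (\<forall>a'. a' \<noteq> a \<longrightarrow> \<Delta> a' b = 0)" using col_unique by blast
  then obtain tau where tau: "\<And>b. \<Delta> (tau b) b = 1" "\<And>b a'. a' \<noteq> tau b \<Longrightarrow> \<Delta> a' b = 0"
    by metis
  have eq: "\<Delta> a b = (if tau b = a then 1 else 0)" for a b using tau by (cases "tau b = a") auto
  have "inj tau"
  proof (rule injI)
    fix b1 b2 assume e: "tau b1 = tau b2"
    obtain b where b: "\<Delta> (tau b1) b = 1" "\<forall>b'. b' \<noteq> b \<longrightarrow> \<Delta> (tau b1) b' = 0" using row_unique by blast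
    have "\<Delta> (tau b1) b1 = 1" "\<Delta> (tau b1) b2 = 1" using tau(1) e by metis+
    then show "b1 = b2" using b(2) by (metis zero_neq_one)
  qed
  moreover have "surj tau"
  proof -
    have "a \<in> range tau" for a
    proof -
      obtain b where "\<Delta> a b = 1" using row_unique by blast
      then have "tau b = a" using eq[of a b] by (simp split: if_splits)
      then show ?thesis by blast
    qed
    then show ?thesis by blast
  qed
  ultimately show ?thesis using eq bij_def by blast
qed

abbreviation "\<tau> \<equiv> transmission_perm V m u v D"

lemma tp: "bij \<tau> \<and> (\<forall>a b. \<Delta> a b = (if \<tau> b = a then 1 else 0))"
proof -
  let ?P = "\<lambda>tau. bij tau \<and> (\<forall>a b. \<Delta> a b = (if tau b = a then 1 else 0))"
  have ex1: "\<exists>!tau. ?P tau"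
  proof -
    obtain tau where t: "?P tau" using tau_ex by blast
    have "tau' = tau" if t': "?P tau'" for tau'
    proof
      fix b
      have "\<Delta> (tau' b) b = 1" using t' by simp
      then show "tau' b = tau b" using t by (simp split: if_splits)
    qed
    then show ?thesis using t by blast
  qed
  have eq: "transmission_perm V m u v D = (THE tau. ?P tau)"
    unfolding transmission_perm_def DD_def by simp
  show ?thesis unfolding eq by (rule theI'[OF ex1])
qed

lemma Dtau: "\<Delta> a b = (if \<tau> b = a then 1 else 0)" using tp by blast

lemma tau_range: "b - dd \<le> \<tau> b"
proof (rule ccontr)
  assume "\<not> b - dd \<le> \<tau> b"
  then have "\<Delta> (\<tau> b) b = 0" by (intro Dzero) simp
  then show False using Dtau[of "\<tau> b" b] by simp
qed

lemma Cab: "R a b - R a (b + 1) = (if \<tau> b \<le> a then 1 else 0)"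
proof -
  define \<phi> where "\<phi> a = R a b - R a (b + 1) - (if \<tau> b \<le> a then 1 else 0)" for a
  have step: "\<phi> (a + 1) = \<phi> a" for a
  proof -
    have "\<Delta> (a + 1) b = R (a + 1) b - R a b - R (a + 1) (b + 1) + R a (b + 1)"
      using Delta_eq[of "a + 1" b] by simp
    then show ?thesis unfolding \<phi>_def using Dtau[of "a + 1" b] by (auto split: if_splits)
  qed
  have "\<phi> (b - dd - 1) = 0" unfolding \<phi>_def using Rneg tau_range[of b] by simp
  then show ?thesis using const_int[of \<phi>, OF step, of a "b - dd - 1"] unfolding \<phi>_def by simp
qed

abbreviation "ff \<equiv> \<lambda>b. R 0 b"

lemma fstep: "ff b - ff (b + 1) = (if \<tau> b \<le> 0 then 1 else 0)" using Cab[of 0 b] by simp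

lemma f_mono_aux: "ff (b + int k) \<le> ff b"
proof (induction k)
  case 0 then show ?case by simp
next
  case (Suc k)
  have "ff (b + int k + 1) \<le> ff (b + int k)" using fstep[of "b + int k"] by (simp split: if_splits)
  moreover have "b + int (Suc k) = b + int k + 1" by simp
  ultimately show ?case using Suc by (metis order_trans)
qed

lemma f_mono: "b \<le> b' \<Longrightarrow> ff b' \<le> ff b"
proof -
  assume "b \<le> b'"
  then have "b' = b + int (nat (b' - b))" by simp
  then show ?thesis using f_mono_aux[of b "nat (b' - b)"] by simp
qed

lemma fneg: "dd < b \<Longrightarrow> ff b = -1" using Rneg by simp
lemma fbig: "b \<le> dd - 2 * gg \<Longrightarrow> ff b = dd - b - gg" using Rbig by simp

lemma f_ge: "-1 \<le> ff b"
proof -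
  have "ff (max b (dd + 1)) \<le> ff b" by (rule f_mono) simp
  moreover have "ff (max b (dd + 1)) = -1" by (rule fneg) simp
  ultimately show ?thesis by simp
qed

lemma S_low: "b < dd - 2 * gg \<Longrightarrow> \<tau> b \<le> 0"
  using fstep[of b] fbig[of b] fbig[of "b + 1"] by (simp split: if_splits)

lemma S_high: "dd < b \<Longrightarrow> \<not> \<tau> b \<le> 0"
  using fstep[of b] fneg[of b] fneg[of "b + 1"] by (simp split: if_splits)


lemma cset_sub: "cset \<tau> y \<subseteq> {dd - 2 * gg..<y}"
proof (rule subsetI)
  fix x assume "x \<in> cset \<tau> y"
  then have x: "x < y" "0 < \<tau> x" unfolding cset_def by auto
  have "\<not> x < dd - 2 * gg" using S_low[of x] x(2) by linarith
  then show "x \<in> {dd - 2 * gg..<y}" using x by simp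
qed

lemma cset_fin: "finite (cset \<tau> y)" using finite_subset[OF cset_sub] by simp

lemma c_formula: "int (card (cset \<tau> y)) = ff y + y + gg - dd"
proof -
  define \<phi> where "\<phi> y = int (card (cset \<tau> y)) - ff y - y" for y
  have step: "\<phi> (y + 1) = \<phi> y" for y
  proof -
    have "card (cset \<tau> (y + 1)) = card (cset \<tau> y) + (if 0 < \<tau> y then 1 else 0)"
    proof (cases "0 < \<tau> y")
      case True
      then have "cset \<tau> (y + 1) = insert y (cset \<tau> y)" unfolding cset_def by auto
      moreover have "y \<notin> cset \<tau> y" unfolding cset_def by simp
      ultimately show ?thesis using True cset_fin[of y] by simp
    next
      case False
      then have "cset \<tau> (y + 1) = cset \<tau> y" unfolding cset_def by (auto simp: zless_add1_eq) (metis order.order_iff_strict)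
      then show ?thesis using False by simp
    qed
    then show ?thesis unfolding \<phi>_def using fstep[of y] by (auto split: if_splits)
  qed
  have "cset \<tau> (dd - 2 * gg) = {}" using cset_sub[of "dd - 2 * gg"] by auto
  then have "\<phi> (dd - 2 * gg) = gg - dd" unfolding \<phi>_def using fbig[of "dd - 2 * gg"] by simp
  then show ?thesis using const_int[of \<phi>, OF step, of y "dd - 2 * gg"] unfolding \<phi>_def by simp
qed


lemma S_f_inj:
  assumes "\<tau> y1 \<le> 0" "\<tau> y2 \<le> 0" "ff y1 = ff y2" shows "y1 = y2"
proof (rule ccontr)
  assume ne: "y1 \<noteq> y2"
  have key: "False" if "\<tau> a \<le> 0" "a < b" "ff a = ff b" for a b
  proof -
    have "ff b \<le> ff (a + 1)" by (rule f_mono) (use that in simp)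
    moreover have "ff a - ff (a + 1) = 1" using fstep[of a] that(1) by simp
    ultimately show False using that(3) by simp
  qed
  show False
  proof (cases "y1 < y2")
    case True then show ?thesis using key[of y1 y2] assms by simp
  next
    case False then have "y2 < y1" using ne by simp
    then show ?thesis using key[of y2 y1] assms by simp
  qed
qed

lemma b_ex: "\<exists>y. \<tau> y \<le> 0 \<and> ff y = int i"
proof -
  define \<Omega> where "\<Omega> = {y. dd - 2 * gg - int i \<le> y \<and> y \<le> dd \<and> int i \<le> ff y}"
  have finO: "finite \<Omega>" unfolding \<Omega>_def by (rule finite_subset[of _ "{dd - 2 * gg - int i..dd}"]) auto
  have y0: "dd - 2 * gg - int i \<in> \<Omega>" unfolding \<Omega>_def using fbig[of "dd - 2 * gg - int i"] gg0 by simp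
  define y where "y = Max \<Omega>"
  have yO: "y \<in> \<Omega>" unfolding y_def using Max_in[OF finO] y0 by blast
  have ymax: "z \<in> \<Omega> \<Longrightarrow> z \<le> y" for z unfolding y_def using finO by simp
  have fy: "int i \<le> ff y" using yO unfolding \<Omega>_def by simp
  have fy1: "ff (y + 1) < int i"
  proof (cases "y + 1 \<le> dd")
    case True
    have "y + 1 \<notin> \<Omega>" using ymax[of "y + 1"] by auto
    then show ?thesis using True yO unfolding \<Omega>_def by auto
  next
    case False then show ?thesis using fneg[of "y + 1"] by simp
  qed
  have "\<tau> y \<le> 0 \<and> ff y = int i" using fstep[of y] fy fy1 by (simp split: if_splits)
  then show ?thesis by blast
qed


lemma bb_spec: "\<tau> (bbsel \<tau> ff i) \<le> 0 \<and> ff (bbsel \<tau> ff i) = int i"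
  unfolding bbsel_def using someI_ex[OF b_ex[of i]] .

lemma rank_shift: "rank V m (\<lambda>x. D x + l * vtx v x) = ff (- l)"
proof -
  have "twist D u v 0 (- (- l)) = (\<lambda>x. D x + l * vtx v x)" unfolding twist_def by simp
  then show ?thesis unfolding RR_def by simp
qed

lemma s_val: "s_seq V m D v i = - bbsel \<tau> ff i"
  unfolding s_seq_def rank_shift
proof (rule Least_equality)
  show "int i \<le> ff (- (- bbsel \<tau> ff i))" using bb_spec[of i] by simp
  fix l assume l: "int i \<le> ff (- l)"
  show "- bbsel \<tau> ff i \<le> l"
  proof (rule ccontr)
    assume "\<not> - bbsel \<tau> ff i \<le> l"
    then have "ff (- l) \<le> ff (bbsel \<tau> ff i + 1)" by (intro f_mono) simp
    moreover have "ff (bbsel \<tau> ff i) - ff (bbsel \<tau> ff i + 1) = 1" using fstep[of "bbsel \<tau> ff i"] bb_spec[of i] by simp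
    ultimately show False using l bb_spec[of i] by simp
  qed
qed

lemma wl_val: "wlambda V m D v i = int (card (cset \<tau> (bbsel \<tau> ff i)))"
  unfolding wlambda_def s_val c_formula using bb_spec[of i] by simp

lemma final: "finite (sci_pairs \<tau>) \<and> int (sci \<tau>) = wsize V m D v"
proof -
  define Y where "Y = {y. \<tau> y \<le> 0 \<and> dd - 2 * gg \<le> y \<and> y \<le> dd}"
  have finY: "finite Y" unfolding Y_def by (rule finite_subset[of _ "{dd - 2 * gg..dd}"]) auto
  have eqp: "sci_pairs \<tau> = (\<lambda>(y, x). (x, y)) ` (SIGMA y:Y. cset \<tau> y)"
  proof
    show "sci_pairs \<tau> \<subseteq> (\<lambda>(y, x). (x, y)) ` (SIGMA y:Y. cset \<tau> y)"
    proof
      fix p assume "p \<in> sci_pairs \<tau>"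
      then obtain x y where p: "p = (x, y)" "x < y" "0 < \<tau> x" "\<tau> y \<le> 0" unfolding sci_pairs_def by auto
      have "\<not> x < dd - 2 * gg" using S_low[of x] p(3) by linarith
      moreover have "\<not> dd < y" using S_high[of y] p(4) by blast
      ultimately have "y \<in> Y" "x \<in> cset \<tau> y" unfolding Y_def cset_def using p by auto
      then show "p \<in> (\<lambda>(y, x). (x, y)) ` (SIGMA y:Y. cset \<tau> y)" using p(1) by force
    qed
    show "(\<lambda>(y, x). (x, y)) ` (SIGMA y:Y. cset \<tau> y) \<subseteq> sci_pairs \<tau>"
      unfolding sci_pairs_def Y_def cset_def by auto
  qed
  have finS: "finite (SIGMA y:Y. cset \<tau> y)" using finY cset_fin by blast
  have inj: "inj_on (\<lambda>(y, x). (x, y)) (SIGMA y:Y. cset \<tau> y)" by (rule inj_onI) auto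
  have "card (sci_pairs \<tau>) = card (SIGMA y:Y. cset \<tau> y)" unfolding eqp using card_image[OF inj] .
  also have "\<dots> = (\<Sum>y\<in>Y. card (cset \<tau> y))" using card_SigmaI finY cset_fin by blast
  finally have sciY: "int (sci \<tau>) = (\<Sum>y\<in>Y. int (card (cset \<tau> y)))" unfolding sci_def by simp
  define Y' where "Y' = {y. \<tau> y \<le> 0 \<and> card (cset \<tau> y) \<noteq> 0}"
  have Y'Y: "Y' \<subseteq> Y"
  proof
    fix y assume "y \<in> Y'"
    then have y: "\<tau> y \<le> 0" "card (cset \<tau> y) \<noteq> 0" unfolding Y'_def by auto
    then obtain x where "x \<in> cset \<tau> y" by fastforce
    then have "dd - 2 * gg \<le> x" "x < y" using cset_sub[of y] by auto
    moreover have "\<not> dd < y" using S_high[of y] y(1) by blast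
    ultimately show "y \<in> Y" unfolding Y_def using y by simp
  qed
  have sY': "(\<Sum>y\<in>Y. int (card (cset \<tau> y))) = (\<Sum>y\<in>Y'. int (card (cset \<tau> y)))"
    by (rule sum.mono_neutral_right[OF finY Y'Y]) (auto simp: Y'_def Y_def)
  define Z where "Z = {i. wlambda V m D v i \<noteq> 0}"
  have bij: "bij_betw (bbsel \<tau> ff) Z Y'"
    unfolding bij_betw_def
  proof
    show "inj_on (bbsel \<tau> ff) Z"
    proof (rule inj_onI)
      fix i j assume e: "bbsel \<tau> ff i = bbsel \<tau> ff j"
      have "int i = int j" using bb_spec[of i] bb_spec[of j] e by metis
      then show "i = j" by simp
    qed
    show "bbsel \<tau> ff ` Z = Y'"
    proof
      show "bbsel \<tau> ff ` Z \<subseteq> Y'"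
        using bb_spec wl_val unfolding Z_def Y'_def by auto
      show "Y' \<subseteq> bbsel \<tau> ff ` Z"
      proof
        fix y assume yY: "y \<in> Y'"
        then have y: "\<tau> y \<le> 0" "card (cset \<tau> y) \<noteq> 0" unfolding Y'_def by auto
        have "ff y - ff (y + 1) = 1" using fstep[of y] y(1) by simp
        then have f0: "0 \<le> ff y" using f_ge[of "y + 1"] by simp
        define i where "i = nat (ff y)"
        have "bbsel \<tau> ff i = y" using S_f_inj[of "bbsel \<tau> ff i" y] bb_spec[of i] y(1) f0 unfolding i_def by simp
        moreover have "i \<in> Z" unfolding Z_def using wl_val[of i] y(2) \<open>bbsel \<tau> ff i = y\<close> by simp
        ultimately show "y \<in> bbsel \<tau> ff ` Z" by blast
      qed
    qed
  qed
  have "wsize V m D v = (\<Sum>i\<in>Z. int (card (cset \<tau> (bbsel \<tau> ff i))))"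
    unfolding wsize_def Z_def using wl_val by simp
  also have "\<dots> = (\<Sum>y\<in>Y'. int (card (cset \<tau> y)))"
    by (rule sum.reindex_bij_betw[OF bij])
  finally have "wsize V m D v = int (sci \<tau>)" using sciY sY' by simp
  moreover have "finite (sci_pairs \<tau>)" unfolding eqp using finS by simp
  ultimately show ?thesis by simp
qed

end


theorem mainTheorem17:
  fixes V :: "'v set" and m :: "'v \<Rightarrow> 'v \<Rightarrow> nat" and u v :: 'v and D :: "'v \<Rightarrow> int"
  assumes "graph V m" and "u \<in> V" and "v \<in> V" and "u \<noteq> v"
    and "divisor V D" and "submodular V m u v D"
  shows "finite (sci_pairs (transmission_perm V m u v D))
    \<and> int (sci (transmission_perm V m u v D)) = wsize V m D v"
  using final[OF assms(1,2,3,5,6)] .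

end
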